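(* For $n\in\mathbb{Z}^+$ we have $$\begin{aligned}&t(3,4,5;n)=2N(3,4,5;2n+3)&&\text{for } n\equiv 3\pmod 4,\\ &t(3,5,20;n)=2N(3,5,20;2n+7)&&\text{for } n\equiv 1\pmod 4,\\ &t(3,5,36;n)=2N(3,5,36;2n+11)&&\text{for } n\equiv 3\pmod 4,\\ &t(3,5,12;n)=\tfrac 12N(3,5,12;8n+20)&&\text{for } n\equiv 1\pmod 4.\end{aligned}$$
   Context: $\mathbb{Z}^+$ is the set of positive integers. For $a,b,c\in\mathbb{Z}^+$ and nonnegative integer $n$, $N(a,b,c;n)$ denotes the number of triples $(x,y,z)\in\mathbb{Z}^3$ with $n=ax^2+by^2+cz^2$, and $t(a,b,c;n)$ denotes the number of triples $(x,y,z)\in\mathbb{Z}^3$ with $n=a\frac{x(x+1)}2+b\frac{y(y+1)}2+c\frac{z(z+1)}2$. *)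

theory Defs
  imports Complex_Main
begin

definition N :: "nat \<Rightarrow> nat \<Rightarrow> nat \<Rightarrow> nat \<Rightarrow> nat" where
  "N a b c n = card {(x :: int, y :: int, z :: int).
      int n = int a * x^2 + int b * y^2 + int c * z^2}"

definition t :: "nat \<Rightarrow> nat \<Rightarrow> nat \<Rightarrow> nat \<Rightarrow> nat" where
  "t a b c n = card {(x :: int, y :: int, z :: int).
      int n = int a * (x * (x + 1) div 2) + int b * (y * (y + 1) div 2)
            + int c * (z * (z + 1) div 2)}"

end

theory Submission
  imports Defs
begin

lemma half_card:
  assumes fin: "finite A" and sub: "B \<subseteq> A" and gA: "\<forall>v\<in>A. g v \<in> A"
    and inv: "\<forall>v\<in>A. g (g v) = v" and sw: "\<forall>v\<in>A. (v \<in> B) = (g v \<notin> B)"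
  shows "card A = 2 * card B"
proof -
  have AU: "A = B \<union> g ` B"
  proof
    show "A \<subseteq> B \<union> g ` B"
    proof
      fix v assume v: "v \<in> A"
      show "v \<in> B \<union> g ` B"
      proof (cases "v \<in> B")
        case True then show ?thesis by simp
      next
        case False
        then have "g v \<in> B" using sw v by blast
        moreover have "v = g (g v)" using inv v by simp
        ultimately show ?thesis by blast
      qed
    qed
    show "B \<union> g ` B \<subseteq> A" using sub gA by blast
  qed
  have disj: "B \<inter> g ` B = {}"
  proof (rule ccontr)
    assume "B \<inter> g ` B \<noteq> {}"
    then obtain w where w: "w \<in> B" "g w \<in> B" by blast
    then show False using sw sub by blast
  qed
  have inj: "inj_on g B"
    by (metis inj_onI inv sub subsetD)
  have finB: "finite B" using fin sub finite_subset by blast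
  have "card A = card B + card (g ` B)"
    using AU disj finB by (metis card_Un_disjoint finite_imageI)
  also have "card (g ` B) = card B" using inj by (rule card_image)
  finally show ?thesis by simp
qed

lemma abs_le_sq: "\<bar>x::int\<bar> \<le> x^2"
proof (cases "x = 0")
  case True then show ?thesis by simp
next
  case False
  then have "1 \<le> \<bar>x\<bar>" by simp
  then have "\<bar>x\<bar> * 1 \<le> \<bar>x\<bar> * \<bar>x\<bar>" by (intro mult_left_mono) auto
  then show ?thesis by (simp add: power2_eq_square abs_mult[symmetric])
qed

lemma fin_sols:
  fixes a b c M :: int
  assumes "a \<ge> 1" "b \<ge> 1" "c \<ge> 1"
  shows "finite {(x,y,z). a*x^2 + b*y^2 + c*z^2 = M}"
proof -
  have bnd: "\<bar>x\<bar> \<le> \<bar>M\<bar> \<and> \<bar>y\<bar> \<le> \<bar>M\<bar> \<and> \<bar>z\<bar> \<le> \<bar>M\<bar>" if e: "a*x^2 + b*y^2 + c*z^2 = M" for x y z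
  proof -
    have px: "x^2 \<le> a*x^2" using assms(1) mult_right_mono[of 1 a "x^2"] by simp
    have py: "y^2 \<le> b*y^2" using assms(2) mult_right_mono[of 1 b "y^2"] by simp
    have pz: "z^2 \<le> c*z^2" using assms(3) mult_right_mono[of 1 c "z^2"] by simp
    have "0 \<le> x^2" "0 \<le> y^2" "0 \<le> z^2" by simp_all
    then show ?thesis using px py pz abs_le_sq[of x] abs_le_sq[of y] abs_le_sq[of z] e by linarith
  qed
  have "{(x,y,z). a*x^2 + b*y^2 + c*z^2 = M} \<subseteq> {-\<bar>M\<bar>..\<bar>M\<bar>} \<times> {-\<bar>M\<bar>..\<bar>M\<bar>} \<times> {-\<bar>M\<bar>..\<bar>M\<bar>}"
  proof (rule subsetI)
    fix p assume "p \<in> {(x,y,z). a*x^2 + b*y^2 + c*z^2 = M}"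
    then obtain x y z where p: "p = (x,y,z)" and e: "a*x^2 + b*y^2 + c*z^2 = M" by auto
    show "p \<in> {-\<bar>M\<bar>..\<bar>M\<bar>} \<times> {-\<bar>M\<bar>..\<bar>M\<bar>} \<times> {-\<bar>M\<bar>..\<bar>M\<bar>}"
      using bnd[OF e] unfolding p by (simp add: abs_le_iff)
  qed
  then show ?thesis by (rule finite_subset) auto
qed

lemma odd_sq: assumes "odd (x::int)" shows "\<exists>c. x^2 = 8*c+1"
proof -
  obtain a where a: "x = 2*a+1" using assms oddE by blast
  have "even (a*(a+1))" by simp
  then obtain d where d: "a*(a+1) = 2*d" by blast
  have "x^2 = 4*(a*(a+1)) + 1" unfolding a by (simp add: algebra_simps power2_eq_square)
  then have "x^2 = 8*d+1" using d by simp
  then show ?thesis by blast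
qed

lemma t_odd:
  "t a b c n = card {(X,Y,Z). odd X \<and> odd Y \<and> odd Z \<and>
     int a * X^2 + int b * Y^2 + int c * Z^2 = 8 * int n + int a + int b + int c}"
proof -
  let ?S = "{(x :: int, y :: int, z :: int).
      int n = int a * (x * (x + 1) div 2) + int b * (y * (y + 1) div 2)
            + int c * (z * (z + 1) div 2)}"
  let ?O = "{(X,Y,Z). odd X \<and> odd Y \<and> odd Z \<and>
     int a * X^2 + int b * Y^2 + int c * Z^2 = 8 * int n + int a + int b + int c}"
  let ?h = "\<lambda>(x::int,y::int,z::int). (2*x+1, 2*y+1, 2*z+1)"
  have tri: "8 * (x * (x + 1) div 2) = (2*x+1)^2 - 1" for x :: int
  proof -
    have "even (x*(x+1))" by simp
    then obtain q where q: "x*(x+1) = 2*q" by blast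
    then have "x * (x + 1) div 2 = q" by simp
    then show ?thesis using q by (simp add: algebra_simps power2_eq_square)
  qed
  have key: "(int n = int a * (x * (x + 1) div 2) + int b * (y * (y + 1) div 2)
            + int c * (z * (z + 1) div 2)) =
     (int a * (2*x+1)^2 + int b * (2*y+1)^2 + int c * (2*z+1)^2 = 8 * int n + int a + int b + int c)"
    for x y z :: int
  proof -
    let ?E = "int a * (x * (x + 1) div 2) + int b * (y * (y + 1) div 2) + int c * (z * (z + 1) div 2)"
    have 1: "(int n = ?E) = (8 * int n = 8 * ?E)" by (simp only: mult_cancel_left) simp
    have 2: "8 * ?E = int a * (8 * (x * (x + 1) div 2)) + int b * (8 * (y * (y + 1) div 2))
            + int c * (8 * (z * (z + 1) div 2))" by (simp add: algebra_simps)
    have 3: "int a * (8 * (x * (x + 1) div 2)) + int b * (8 * (y * (y + 1) div 2))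
            + int c * (8 * (z * (z + 1) div 2)) = int a * ((2*x+1)^2 - 1) + int b * ((2*y+1)^2 - 1) + int c * ((2*z+1)^2 - 1)"
      by (simp only: tri)
    have 4: "(8 * int n = int a * ((2*x+1)^2 - 1) + int b * ((2*y+1)^2 - 1) + int c * ((2*z+1)^2 - 1))
       = (int a * (2*x+1)^2 + int b * (2*y+1)^2 + int c * (2*z+1)^2 = 8 * int n + int a + int b + int c)"
      by (simp add: algebra_simps eq_commute)
    show ?thesis by (simp only: 1 2 3 4)
  qed
  have inj: "inj_on ?h ?S" by (auto simp: inj_on_def)
  have img: "?h ` ?S = ?O"
  proof
    show "?h ` ?S \<subseteq> ?O" using key by auto
    show "?O \<subseteq> ?h ` ?S"
    proof clarify
      fix X Y Z :: int
      assume o: "odd X" "odd Y" "odd Z" and e: "int a * X^2 + int b * Y^2 + int c * Z^2 = 8 * int n + int a + int b + int c"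
      obtain x where x: "X = 2*x+1" using o(1) oddE by blast
      obtain y where y: "Y = 2*y+1" using o(2) oddE by blast
      obtain z where z: "Z = 2*z+1" using o(3) oddE by blast
      have "(x,y,z) \<in> ?S" using key[of x y z] e x y z by simp
      then show "(X,Y,Z) \<in> ?h ` ?S" using x y z by force
    qed
  qed
  have "t a b c n = card ?S" by (simp add: t_def)
  also have "\<dots> = card (?h ` ?S)" using inj by (simp add: card_image)
  also have "\<dots> = card ?O" using img by simp
  finally show ?thesis .
qed


lemma odd_dvd8: assumes "odd (u::int)" "8 dvd u*v" shows "8 dvd v"
proof -
  have "coprime (2::int) u" using assms(1) by (simp add: coprime_left_2_iff_odd)
  then have "coprime ((2::int)^3) u" by (simp only: coprime_power_left_iff) simp
  then have "coprime (8::int) u" by simp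
  then show ?thesis using assms(2) by (simp add: coprime_dvd_mult_right_iff)
qed

lemma K16:
  fixes X Y j :: int
  assumes oX: "odd X" and oY: "odd Y" and e: "3*X^2 + 5*Y^2 = 32*j + 16"
  shows "16 dvd X + 5*Y \<or> 16 dvd X - 5*Y"
proof -
  obtain c where c: "Y^2 = 8*c+1" using odd_sq[OF oY] by blast
  obtain a where a: "X = 2*a+1" using oX oddE by blast
  obtain b where b: "Y = 2*b+1" using oY oddE by blast
  define u where "u = a + 5*b + 3"
  define v where "v = a - 5*b - 2"
  have u2: "X + 5*Y = 2*u" unfolding u_def a b by simp
  have v2: "X - 5*Y = 2*v" unfolding v_def a b by simp
  have "4*(u*v) = X^2 - 25*Y^2"
  proof -
    have "4*(u*v) = (2*u)*(2*v)" by simp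
    also have "\<dots> = (X + 5*Y)*(X - 5*Y)" using u2 v2 by simp
    also have "\<dots> = X^2 - 25*Y^2" by (simp add: algebra_simps power2_eq_square)
    finally show ?thesis .
  qed
  then have "12*(u*v) = 32*(j - 2 - 20*c)" using e c by (simp add: algebra_simps)
  then have "3*(u*v) = 8*(j - 2 - 20*c)" by linarith
  then have "8 dvd 3*(u*v)" by (metis dvd_triv_left)
  then have d: "8 dvd u*v" using odd_dvd8[of 3 "u*v"] by simp
  have "u + v = 2*a + 1" unfolding u_def v_def by simp
  then have "odd (u + v)" by simp
  then have "odd u \<or> odd v" by auto
  then show ?thesis
  proof
    assume "odd u"
    then have "8 dvd v" using odd_dvd8 d by blast
    then obtain w where "v = 8*w" by blast
    then have "X - 5*Y = 16*w" using v2 by simp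
    then show ?thesis by simp
  next
    assume "odd v"
    then have "8 dvd u" using odd_dvd8 d by (metis mult.commute)
    then obtain w where "u = 8*w" by blast
    then have "X + 5*Y = 16*w" using u2 by simp
    then show ?thesis by simp
  qed
qed


lemma odd_dvd4: assumes "odd (u::int)" "4 dvd u*v" shows "4 dvd v"
proof -
  have "coprime (2::int) u" using assms(1) by (simp add: coprime_left_2_iff_odd)
  then have "coprime ((2::int)^2) u" by (simp only: coprime_power_left_iff) simp
  then have "coprime (4::int) u" by simp
  then show ?thesis using assms(2) by (simp add: coprime_dvd_mult_right_iff)
qed

lemma K8:
  fixes X Z j :: int
  assumes oX: "odd X" and oZ: "odd Z" and e: "3*X^2 + 5*Z^2 = 32*j"
  shows "(\<exists>r. Z - 3*X = 16*r + 8) \<or> (\<exists>r. Z + 3*X = 16*r + 8)"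
proof -
  obtain c where c: "Z^2 = 8*c+1" using odd_sq[OF oZ] by blast
  obtain a where a: "X = 2*a+1" using oX oddE by blast
  obtain b where b: "Z = 2*b+1" using oZ oddE by blast
  define p where "p = 3*a - b + 1"
  define q where "q = 3*a + b + 2"
  have p2: "3*X - Z = 2*p" unfolding p_def a b by simp
  have q2: "3*X + Z = 2*q" unfolding q_def a b by simp
  have "4*(p*q) = 9*X^2 - Z^2"
  proof -
    have "4*(p*q) = (2*p)*(2*q)" by simp
    also have "\<dots> = (3*X - Z)*(3*X + Z)" using p2 q2 by simp
    also have "\<dots> = 9*X^2 - Z^2" by (simp add: algebra_simps power2_eq_square)
    finally show ?thesis .
  qed
  then have pq: "p*q = 4*(6*j - 8*c - 1)" using e c by (simp add: algebra_simps)
  have oL: "odd (6*j - 8*c - 1)" by simp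
  have "p + q = 6*a + 3" unfolding p_def q_def by simp
  then have "odd (p + q)" by simp
  then have "odd p \<or> odd q" by auto
  then show ?thesis
  proof
    assume op: "odd p"
    have "4 dvd p*q" using pq by simp
    then have "4 dvd q" using odd_dvd4 op by blast
    then obtain q' where q': "q = 4*q'" by blast
    then have "p*q' = 6*j - 8*c - 1" using pq by simp
    then have "odd q'" using oL by (metis even_mult_iff)
    then obtain r where "q' = 2*r+1" using oddE by blast
    then have "Z + 3*X = 16*r + 8" using q2 q' by simp
    then show ?thesis by blast
  next
    assume oq: "odd q"
    have "4 dvd q*p" using pq by (simp add: mult.commute)
    then have "4 dvd p" using odd_dvd4 oq by blast
    then obtain p' where p': "p = 4*p'" by blast
    then have "4*(q*p') = 4*(6*j - 8*c - 1)" using pq by (simp add: algebra_simps)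
    then have "q*p' = 6*j - 8*c - 1" by simp
    then have "odd p'" using oL by (metis even_mult_iff)
    then obtain r where "p' = 2*r+1" using oddE by blast
    then have "Z - 3*X = 16*(-r-1) + 8" using p2 p' by simp
    then show ?thesis by blast
  qed
qed


lemma two_odd: "(2::int)*w \<noteq> 2*s+1"
proof
  assume h: "2*w = 2*s+1"
  have "even (2*w)" by simp
  then have "even (2*s+1)" using h by simp
  then show False by simp
qed

lemma sq2: "(2*(u::int))^2 = 4*u^2" by (simp add: power_mult_distrib)

lemma T1:
  fixes x y z k :: int
  assumes e: "3*x^2+4*y^2+5*z^2 = 8*k+9"
  shows "even x \<and> odd z \<and> odd (x div 2 + y)"
proof -
  have "3*x^2+4*y^2+5*z^2 = 2*(4*k+4)+1" using e by simp
  then have "odd (3*x^2+4*y^2+5*z^2)" by (metis odd_two_times_div_two_succ even_add even_mult_iff dvd_triv_left odd_one)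
  then have xz: "odd x \<longleftrightarrow> even z" by auto
  have ex: "even x"
  proof (rule ccontr)
    assume "\<not> even x"
    then have ox: "odd x" by simp
    then have "even z" using xz by simp
    then obtain f where z: "z = 2*f" by blast
    obtain c where c: "x^2 = 8*c+1" using odd_sq ox by blast
    have "z^2 = 4*f^2" using z sq2 by simp
    then have "2*(y^2 + 5*f^2 - 2*k + 6*c) = 2*1+1" using e c by (smt (verit))
    then show False using two_odd by blast
  qed
  then have oz: "odd z" using xz by simp
  obtain u where u: "x = 2*u" using ex by blast
  obtain c where c: "z^2 = 8*c+1" using odd_sq oz by blast
  have "x^2 = 4*u^2" using u sq2 by simp
  then have "3*u^2 + y^2 = 2*(k - 5*c) + 1" using e c by (smt (verit))
  then have "odd (3*u^2 + y^2)" by (metis even_add even_mult_iff dvd_triv_left odd_one)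
  then have "odd (u + y)" by auto
  moreover have "x div 2 = u" using u by simp
  ultimately show ?thesis using ex oz by simp
qed


lemma T2:
  fixes x y z k :: int
  assumes e: "3*x^2+5*y^2+20*z^2 = 8*k+9"
  shows "even x \<and> odd y \<and> odd (x div 2 + z)"
proof -
  have "3*x^2+5*y^2+20*z^2 = 2*(4*k+4)+1" using e by simp
  then have "odd (3*x^2+5*y^2+20*z^2)" by (metis even_add even_mult_iff dvd_triv_left odd_one)
  then have xy: "odd x \<longleftrightarrow> even y" by auto
  have ex: "even x"
  proof (rule ccontr)
    assume "\<not> even x"
    then have ox: "odd x" by simp
    then have "even y" using xy by simp
    then obtain f where y: "y = 2*f" by blast
    obtain c where c: "x^2 = 8*c+1" using odd_sq ox by blast
    have "y^2 = 4*f^2" using y sq2 by simp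
    then have "2*(5*f^2 + 5*z^2 - 2*k + 6*c) = 2*1+1" using e c by (smt (verit))
    then show False using two_odd by blast
  qed
  then have oy: "odd y" using xy by simp
  obtain u where u: "x = 2*u" using ex by blast
  obtain c where c: "y^2 = 8*c+1" using odd_sq oy by blast
  have "x^2 = 4*u^2" using u sq2 by simp
  then have "3*u^2 + 5*z^2 = 2*(k - 5*c) + 1" using e c by (smt (verit))
  then have "odd (3*u^2 + 5*z^2)" by (metis even_add even_mult_iff dvd_triv_left odd_one)
  then have "odd (u + z)" by auto
  moreover have "x div 2 = u" using u by simp
  ultimately show ?thesis using ex oy by simp
qed

lemma T3:
  fixes x y z k :: int
  assumes e: "3*x^2+5*y^2+36*z^2 = 8*k+17"
  shows "even x \<and> odd y \<and> odd (x div 2 + z)"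
proof -
  have "3*x^2+5*y^2+36*z^2 = 2*(4*k+8)+1" using e by simp
  then have "odd (3*x^2+5*y^2+36*z^2)" by (metis even_add even_mult_iff dvd_triv_left odd_one)
  then have xy: "odd x \<longleftrightarrow> even y" by auto
  have ex: "even x"
  proof (rule ccontr)
    assume "\<not> even x"
    then have ox: "odd x" by simp
    then have "even y" using xy by simp
    then obtain f where y: "y = 2*f" by blast
    obtain c where c: "x^2 = 8*c+1" using odd_sq ox by blast
    have "y^2 = 4*f^2" using y sq2 by simp
    then have "2*(5*f^2 + 9*z^2 - 2*k + 6*c) = 2*3+1" using e c by (smt (verit))
    then show False using two_odd by blast
  qed
  then have oy: "odd y" using xy by simp
  obtain u where u: "x = 2*u" using ex by blast
  obtain c where c: "y^2 = 8*c+1" using odd_sq oy by blast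
  have "x^2 = 4*u^2" using u sq2 by simp
  then have "3*u^2 + 9*z^2 = 2*(k - 5*c + 1) + 1" using e c by (smt (verit))
  then have "odd (3*u^2 + 9*z^2)" by (metis even_add even_mult_iff dvd_triv_left odd_one)
  then have "odd (u + z)" by auto
  moreover have "x div 2 = u" using u by simp
  ultimately show ?thesis using ex oy by simp
qed

lemma P4:
  fixes x y z k :: int
  assumes e: "3*x^2+5*y^2+12*z^2 = 32*k+28"
  shows "(odd x \<and> odd y \<and> odd z) \<or> (even x \<and> even y)"
proof -
  have "3*x^2+5*y^2+12*z^2 = 2*(16*k+14)" using e by simp
  then have "even (3*x^2+5*y^2+12*z^2)" by (metis dvd_triv_left)
  then have xy: "odd x \<longleftrightarrow> odd y" by auto
  show ?thesis
  proof (cases "odd x")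
    case True
    then have oy: "odd y" using xy by simp
    obtain c where c: "x^2 = 8*c+1" using odd_sq True by blast
    obtain d where d: "y^2 = 8*d+1" using odd_sq oy by blast
    have "3*z^2 = 2*(4*k - 3*c - 5*d + 2) + 1" using e c d by (smt (verit))
    then have "odd (3*z^2)" by (metis even_add even_mult_iff dvd_triv_left odd_one)
    then have "odd z" by simp
    then show ?thesis using True oy by simp
  next
    case False
    then show ?thesis using xy by simp
  qed
qed

lemma E4:
  fixes x y z k :: int
  assumes e: "3*x^2+5*y^2+12*z^2 = 32*k+28" and ex: "even x"
  shows "odd z \<longleftrightarrow> even (x div 2)"
proof -
  have ey: "even y" using P4[OF e] ex by auto
  obtain a where a: "x = 2*a" using ex by blast
  obtain b where b: "y = 2*b" using ey by blast
  have "x^2 = 4*a^2" "y^2 = 4*b^2" using a b sq2 by simp_all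
  then have e2: "3*a^2 + 5*b^2 + 3*z^2 = 8*k + 7" using e by (smt (verit))
  have xa: "x div 2 = a" using a by simp
  show ?thesis
  proof
    assume oz: "odd z"
    show "even (x div 2)"
    proof (rule ccontr)
      assume "\<not> even (x div 2)"
      then have oa: "odd a" using xa by simp
      obtain c where c: "z^2 = 8*c+1" using odd_sq oz by blast
      obtain d where d: "a^2 = 8*d+1" using odd_sq oa by blast
      have "5*b^2 = 2*(4*k - 12*d - 12*c) + 1" using e2 c d by (smt (verit))
      then have "odd (5*b^2)" by (metis even_add even_mult_iff dvd_triv_left odd_one)
      then have "odd b" by simp
      then obtain g where g: "b^2 = 8*g+1" using odd_sq by blast
      have "2*(3*d + 5*g + 3*c - k) = 2*(-1)+1" using e2 c d g by (smt (verit))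
      then show False using two_odd by blast
    qed
  next
    assume ea: "even (x div 2)"
    show "odd z"
    proof (rule ccontr)
      assume "\<not> odd z"
      then have ez: "even z" by simp
      obtain a' where a': "a = 2*a'" using ea xa by auto
      obtain z' where z': "z = 2*z'" using ez by blast
      have "a^2 = 4*a'^2" "z^2 = 4*z'^2" using a' z' sq2 by simp_all
      then have "5*b^2 = 2*(4*k + 3 - 6*a'^2 - 6*z'^2) + 1" using e2 by (smt (verit))
      then have "odd (5*b^2)" by (metis even_add even_mult_iff dvd_triv_left odd_one)
      then have "odd b" by simp
      then obtain g where g: "b^2 = 8*g+1" using odd_sq by blast
      have "2*(3*a'^2 + 3*z'^2 - 2*k + 10*g) = 2*0+1"
        using e2 g \<open>a^2 = 4*a'^2\<close> \<open>z^2 = 4*z'^2\<close> by (smt (verit))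
      then show False using two_odd by blast
    qed
  qed
qed

lemma E1:
  fixes x y z k :: int
  assumes e: "3*x^2+5*y^2+12*z^2 = 32*k+28" and ex: "even x" and oz: "odd z"
  shows "\<exists>p q. x = 4*p \<and> y = 4*q \<and> odd (p+q)"
proof -
  have ey: "even y" using P4[OF e] ex by auto
  obtain a where a: "x = 2*a" using ex by blast
  obtain b where b: "y = 2*b" using ey by blast
  have "x^2 = 4*a^2" "y^2 = 4*b^2" using a b sq2 by simp_all
  then have e2: "3*a^2 + 5*b^2 + 3*z^2 = 8*k + 7" using e by (smt (verit))
  have "even (x div 2)" using E4[OF e ex] oz by simp
  then have "even a" using a by simp
  then obtain p where p: "a = 2*p" by blast
  obtain c where c: "z^2 = 8*c+1" using odd_sq oz by blast
  have "a^2 = 4*p^2" using p sq2 by simp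
  then have "5*b^2 = 2*(4*k + 2 - 12*c - 6*p^2)" using e2 c by (smt (verit))
  then have "even (5*b^2)" by (metis dvd_triv_left)
  then have "even b" by simp
  then obtain q where q: "b = 2*q" by blast
  have "b^2 = 4*q^2" using q sq2 by simp
  then have "3*p^2 + 5*q^2 = 2*(k - 3*c) + 1" using e2 c \<open>a^2 = 4*p^2\<close> by (smt (verit))
  then have "odd (3*p^2 + 5*q^2)" by (metis even_add even_mult_iff dvd_triv_left odd_one)
  then have "odd (p+q)" by auto
  moreover have "x = 4*p" "y = 4*q" using a b p q by simp_all
  ultimately show ?thesis by blast
qed


lemma case2:
  fixes n :: nat
  assumes nm: "n mod 4 = 1"
  shows "t 3 5 20 n = 2 * N 3 5 20 (2 * n + 7)"
proof -
  obtain k where nk: "n = 4*k+1" using nm by (metis div_mod_decomp mult.commute)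
  define K where "K = int k"
  define Od where "Od = {(X::int,Y::int,Z::int). odd X \<and> odd Y \<and> odd Z \<and> 3*X^2+5*Y^2+20*Z^2 = 32*K+36}"
  define Op where "Op = {(X::int,Y::int,Z::int). odd X \<and> odd Y \<and> odd Z \<and> 3*X^2+5*Y^2+20*Z^2 = 32*K+36 \<and> 16 dvd X+5*Y}"
  define Ts where "Ts = {(x::int,y::int,z::int). 3*x^2+5*y^2+20*z^2 = 8*K+9}"
  have tO: "t 3 5 20 n = card Od"
    unfolding t_odd Od_def K_def nk by (simp add: algebra_simps)
  have NT: "N 3 5 20 (2 * n + 7) = card Ts"
    unfolding N_def Ts_def K_def nk by (simp add: algebra_simps eq_commute)
  have finO: "finite Od"
  proof -
    have "Od \<subseteq> {(x,y,z). 3*x^2 + 5*y^2 + 20*z^2 = 32*K+36}" unfolding Od_def by auto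
    moreover have "finite {(x::int,y::int,z::int). 3*x^2 + 5*y^2 + 20*z^2 = 32*K+36}"
      by (rule fin_sols) auto
    ultimately show ?thesis by (rule finite_subset)
  qed
  let ?g = "\<lambda>(X::int,Y::int,Z::int). (-X,Y,Z)"
  have c1: "card Od = 2 * card Op"
  proof (rule half_card[OF finO, where g = ?g])
    show "Op \<subseteq> Od" unfolding Od_def Op_def by auto
    show "\<forall>v\<in>Od. ?g v \<in> Od" unfolding Od_def by auto
    show "\<forall>v\<in>Od. ?g (?g v) = v" by auto
    show "\<forall>v\<in>Od. (v \<in> Op) = (?g v \<notin> Op)"
    proof
      fix v assume "v \<in> Od"
      then obtain X Y Z where v: "v = (X,Y,Z)" and oX: "odd X" and oY: "odd Y" and oZ: "odd Z"
        and e: "3*X^2+5*Y^2+20*Z^2 = 32*K+36" unfolding Od_def by auto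
      obtain c where c: "Z^2 = 8*c+1" using odd_sq oZ by blast
      have "3*X^2+5*Y^2 = 32*(K - 5*c) + 16" using e c by (smt (verit))
      then have k16: "16 dvd X+5*Y \<or> 16 dvd X-5*Y" using K16 oX oY by blast
      have m: "(16 dvd -X+5*Y) = (16 dvd X-5*Y)"
      proof -
        have "-X+5*Y = -(X-5*Y)" by simp
        then show ?thesis by (simp only: dvd_minus_iff)
      qed
      have nb: "\<not> (16 dvd X+5*Y \<and> 16 dvd X-5*Y)"
      proof
        assume "16 dvd X+5*Y \<and> 16 dvd X-5*Y"
        then obtain h1 h2 where h1: "X+5*Y = 16*h1" and h2: "X-5*Y = 16*h2" by blast
        obtain b where b: "Y = 2*b+1" using oY oddE by blast
        have "2*(4*h1 - 4*h2 - 5*b) = 2*2+1" using h1 h2 b by (smt (verit))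
        then show False using two_odd by blast
      qed
      show "(v \<in> Op) = (?g v \<notin> Op)"
        unfolding v Op_def using oX oY oZ e k16 m nb by auto
    qed
  qed
  let ?f = "\<lambda>(X::int,Y::int,Z::int). ((X+5*Y) div 8, Z, (3*X-Y) div 16)"
  let ?h = "\<lambda>(x::int,y::int,z::int). (x div 2 + 5*z, 3*(x div 2) - z, y)"
  have fO: "?f v = (2*p, Z, 3*p - Y) \<and> X = 16*p - 5*Y" if v: "v = (X,Y,Z)" and p: "X+5*Y = 16*p" for v X Y Z p
  proof -
    have "X+5*Y = 8*(2*p)" using p by simp
    then have 1: "(X+5*Y) div 8 = 2*p" by simp
    have "3*X - Y = 16*(3*p - Y)" using p by (smt (verit))
    then have 2: "(3*X-Y) div 16 = 3*p - Y" by simp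
    show ?thesis using v 1 2 p by simp
  qed
  have inj: "inj_on ?f Op"
  proof (rule inj_on_inverseI[where g = ?h])
    fix v assume "v \<in> Op"
    then obtain X Y Z p where v: "v = (X,Y,Z)" and p: "X+5*Y = 16*p" unfolding Op_def by blast
    show "?h (?f v) = v" using fO[OF v p] v by simp
  qed
  have img: "?f ` Op = Ts"
  proof
    show "?f ` Op \<subseteq> Ts"
    proof
      fix w assume "w \<in> ?f ` Op"
      then obtain v where w: "w = ?f v" and vO: "v \<in> Op" by blast
      then obtain X Y Z p where v: "v = (X,Y,Z)" and p: "X+5*Y = 16*p"
        and e: "3*X^2+5*Y^2+20*Z^2 = 32*K+36" unfolding Op_def by blast
      have fv: "?f v = (2*p, Z, 3*p - Y)" and Xp: "X = 16*p - 5*Y" using fO[OF v p] by auto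
      have "4*(3*(2*p)^2 + 5*Z^2 + 20*(3*p-Y)^2) = 3*X^2+5*Y^2+20*Z^2"
        unfolding Xp by (simp add: algebra_simps power2_eq_square)
      then have "3*(2*p)^2 + 5*Z^2 + 20*(3*p-Y)^2 = 8*K+9" using e by simp
      then show "w \<in> Ts" unfolding w fv Ts_def by simp
    qed
    show "Ts \<subseteq> ?f ` Op"
    proof
      fix w assume "w \<in> Ts"
      then obtain x y z where w: "w = (x,y,z)" and e: "3*x^2+5*y^2+20*z^2 = 8*K+9"
        unfolding Ts_def by blast
      have P: "even x \<and> odd y \<and> odd (x div 2 + z)" using T2[OF e] .
      define u where "u = x div 2"
      have xu: "x = 2*u" using P unfolding u_def by simp
      have ouz: "odd (u+z)" using P unfolding u_def by simp
      define X where "X = u + 5*z"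
      define Y where "Y = 3*u - z"
      have oX: "odd X" using ouz unfolding X_def by simp
      have oY: "odd Y" using ouz unfolding Y_def by simp
      have "3*X^2+5*Y^2+20*y^2 = 4*(3*x^2+5*y^2+20*z^2)"
        unfolding X_def Y_def xu by (simp add: algebra_simps power2_eq_square)
      then have eX: "3*X^2+5*Y^2+20*y^2 = 32*K+36" using e by simp
      have d: "X + 5*Y = 16*u" unfolding X_def Y_def by simp
      have inO: "(X,Y,y) \<in> Op" unfolding Op_def using oX oY P eX d by auto
      have "?f (X,Y,y) = (2*u, y, 3*u - Y)" using fO[of "(X,Y,y)" X Y y u] d by simp
      also have "\<dots> = w" unfolding w xu Y_def by simp
      finally have fw: "?f (X,Y,y) = w" .
      show "w \<in> ?f ` Op" by (rule image_eqI[where f = "?f", OF fw[symmetric] inO])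
    qed
  qed
  have "card Op = card Ts" using card_image[OF inj] img by simp
  then show ?thesis using tO NT c1 by simp
qed


lemma case4:
  fixes n :: nat
  assumes nm: "n mod 4 = 1"
  shows "N 3 5 12 (8 * n + 20) = 2 * t 3 5 12 n"
proof -
  obtain k where nk: "n = 4*k+1" using nm by (metis div_mod_decomp mult.commute)
  define K where "K = int k"
  define Al where "Al = {(x::int,y::int,z::int). 3*x^2+5*y^2+12*z^2 = 32*K+28}"
  define Od where "Od = {(X::int,Y::int,Z::int). odd X \<and> odd Y \<and> odd Z \<and> 3*X^2+5*Y^2+12*Z^2 = 32*K+28}"
  define Op where "Op = {(X::int,Y::int,Z::int). odd X \<and> odd Y \<and> odd Z \<and> 3*X^2+5*Y^2+12*Z^2 = 32*K+28 \<and> 16 dvd X+5*Y}"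
  define E where "E = {(x::int,y::int,z::int). 3*x^2+5*y^2+12*z^2 = 32*K+28 \<and> even x}"
  define E1 where "E1 = {(x::int,y::int,z::int). 3*x^2+5*y^2+12*z^2 = 32*K+28 \<and> even x \<and> odd z}"
  have tO: "t 3 5 12 n = card Od"
    unfolding t_odd Od_def K_def nk by (simp add: algebra_simps)
  have NA: "N 3 5 12 (8 * n + 20) = card Al"
    unfolding N_def Al_def K_def nk by (simp add: algebra_simps eq_commute)
  have finA: "finite Al" unfolding Al_def by (rule fin_sols) auto
  have finO: "finite Od" by (rule finite_subset[OF _ finA]) (auto simp: Od_def Al_def)
  have finE: "finite E" by (rule finite_subset[OF _ finA]) (auto simp: E_def Al_def)
  have AU: "Al = Od \<union> E"
  proof
    show "Al \<subseteq> Od \<union> E"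
    proof
      fix v assume "v \<in> Al"
      then obtain x y z where v: "v = (x,y,z)" and e: "3*x^2+5*y^2+12*z^2 = 32*K+28" unfolding Al_def by blast
      show "v \<in> Od \<union> E" using P4[OF e] e unfolding v Od_def E_def by auto
    qed
    show "Od \<union> E \<subseteq> Al" unfolding Od_def E_def Al_def by auto
  qed
  have dj: "Od \<inter> E = {}" unfolding Od_def E_def by auto
  have cA: "card Al = card Od + card E" using AU dj finO finE by (simp add: card_Un_disjoint)
  let ?s = "\<lambda>(x::int,y::int,z::int). (2*z, y, x div 2)"
  have cE: "card E = 2 * card E1"
  proof (rule half_card[OF finE, where g = ?s])
    show "E1 \<subseteq> E" unfolding E_def E1_def by auto
    show "\<forall>v\<in>E. ?s v \<in> E"
    proof
      fix v assume "v \<in> E"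
      then obtain x y z where v: "v = (x,y,z)" and e: "3*x^2+5*y^2+12*z^2 = 32*K+28" and ex: "even x"
        unfolding E_def by blast
      have "x = 2*(x div 2)" using ex by simp
      then have "x^2 = 4*(x div 2)^2" using sq2 by metis
      then have "3*(2*z)^2+5*y^2+12*(x div 2)^2 = 32*K+28" using e sq2 by (smt (verit))
      then show "?s v \<in> E" unfolding v E_def by simp
    qed
    show "\<forall>v\<in>E. ?s (?s v) = v" unfolding E_def by auto
    show "\<forall>v\<in>E. (v \<in> E1) = (?s v \<notin> E1)"
    proof
      fix v assume "v \<in> E"
      then obtain x y z where v: "v = (x,y,z)" and e: "3*x^2+5*y^2+12*z^2 = 32*K+28" and ex: "even x"
        unfolding E_def by blast
      have "x = 2*(x div 2)" using ex by simp
      then have "x^2 = 4*(x div 2)^2" using sq2 by metis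
      then have e': "3*(2*z)^2+5*y^2+12*(x div 2)^2 = 32*K+28" using e sq2 by (smt (verit))
      show "(v \<in> E1) = (?s v \<notin> E1)" unfolding v E1_def using E4[OF e ex] e e' ex by auto
    qed
  qed
  let ?g = "\<lambda>(X::int,Y::int,Z::int). (-X,Y,Z)"
  have c1: "card Od = 2 * card Op"
  proof (rule half_card[OF finO, where g = ?g])
    show "Op \<subseteq> Od" unfolding Od_def Op_def by auto
    show "\<forall>v\<in>Od. ?g v \<in> Od" unfolding Od_def by auto
    show "\<forall>v\<in>Od. ?g (?g v) = v" by auto
    show "\<forall>v\<in>Od. (v \<in> Op) = (?g v \<notin> Op)"
    proof
      fix v assume "v \<in> Od"
      then obtain X Y Z where v: "v = (X,Y,Z)" and oX: "odd X" and oY: "odd Y" and oZ: "odd Z"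
        and e: "3*X^2+5*Y^2+12*Z^2 = 32*K+28" unfolding Od_def by auto
      obtain c where c: "Z^2 = 8*c+1" using odd_sq oZ by blast
      have "3*X^2+5*Y^2 = 32*(K - 3*c) + 16" using e c by (smt (verit))
      then have k16: "16 dvd X+5*Y \<or> 16 dvd X-5*Y" using K16 oX oY by blast
      have m: "(16 dvd -X+5*Y) = (16 dvd X-5*Y)"
      proof -
        have "-X+5*Y = -(X-5*Y)" by simp
        then show ?thesis by (simp only: dvd_minus_iff)
      qed
      have nb: "\<not> (16 dvd X+5*Y \<and> 16 dvd X-5*Y)"
      proof
        assume "16 dvd X+5*Y \<and> 16 dvd X-5*Y"
        then obtain h1 h2 where h1: "X+5*Y = 16*h1" and h2: "X-5*Y = 16*h2" by blast
        obtain b where b: "Y = 2*b+1" using oY oddE by blast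
        have "2*(4*h1 - 4*h2 - 5*b) = 2*2+1" using h1 h2 b by (smt (verit))
        then show False using two_odd by blast
      qed
      show "(v \<in> Op) = (?g v \<notin> Op)"
        unfolding v Op_def using oX oY oZ e k16 m nb by auto
    qed
  qed
  let ?f = "\<lambda>(X::int,Y::int,Z::int). ((X+5*Y) div 4, (3*X-Y) div 4, Z)"
  let ?h = "\<lambda>(x::int,y::int,z::int). (x div 4 + 5*(y div 4), 3*(x div 4) - y div 4, z)"
  have fO: "?f v = (4*p, 12*p - 4*Y, Z) \<and> X = 16*p - 5*Y" if v: "v = (X,Y,Z)" and p: "X+5*Y = 16*p" for v X Y Z p
  proof -
    have "X+5*Y = 4*(4*p)" using p by simp
    then have 1: "(X+5*Y) div 4 = 4*p" by simp
    have "3*X - Y = 4*(12*p - 4*Y)" using p by (smt (verit))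
    then have 2: "(3*X-Y) div 4 = 12*p - 4*Y" by simp
    show ?thesis using v 1 2 p by simp
  qed
  have inj: "inj_on ?f Op"
  proof (rule inj_on_inverseI[where g = ?h])
    fix v assume "v \<in> Op"
    then obtain X Y Z p where v: "v = (X,Y,Z)" and p: "X+5*Y = 16*p" unfolding Op_def by blast
    have a: "(4*p) div 4 = p" by simp
    have b: "(12*p - 4*Y) div 4 = 3*p - Y"
    proof -
      have "12*p - 4*Y = 4*(3*p - Y)" by simp
      then show ?thesis by simp
    qed
    show "?h (?f v) = v" using fO[OF v p] v a b by simp
  qed
  have img: "?f ` Op = E1"
  proof
    show "?f ` Op \<subseteq> E1"
    proof
      fix w assume "w \<in> ?f ` Op"
      then obtain v where w: "w = ?f v" and vO: "v \<in> Op" by blast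
      then obtain X Y Z p where v: "v = (X,Y,Z)" and p: "X+5*Y = 16*p" and oZ: "odd Z"
        and e: "3*X^2+5*Y^2+12*Z^2 = 32*K+28" unfolding Op_def by blast
      have fv: "?f v = (4*p, 12*p - 4*Y, Z)" and Xp: "X = 16*p - 5*Y" using fO[OF v p] by auto
      have "3*(4*p)^2 + 5*(12*p - 4*Y)^2 + 12*Z^2 = 3*X^2+5*Y^2+12*Z^2"
        unfolding Xp by (simp add: algebra_simps power2_eq_square)
      then have "3*(4*p)^2 + 5*(12*p - 4*Y)^2 + 12*Z^2 = 32*K+28" using e by simp
      moreover have "even (4*p)" by simp
      ultimately show "w \<in> E1" unfolding w fv E1_def using oZ by simp
    qed
    show "E1 \<subseteq> ?f ` Op"
    proof
      fix w assume "w \<in> E1"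
      then obtain x y z where w: "w = (x,y,z)" and e: "3*x^2+5*y^2+12*z^2 = 32*K+28"
        and ex: "even x" and oz: "odd z"
        unfolding E1_def by blast
      obtain p q where xp: "x = 4*p" and yq: "y = 4*q" and opq: "odd (p+q)" using E1[OF e ex oz] by blast
      define X where "X = p + 5*q"
      define Y where "Y = 3*p - q"
      have oX: "odd X" using opq unfolding X_def by simp
      have oY: "odd Y" using opq unfolding Y_def by simp
      have "3*X^2+5*Y^2+12*z^2 = 3*x^2+5*y^2+12*z^2"
        unfolding X_def Y_def xp yq by (simp add: algebra_simps power2_eq_square)
      then have eX: "3*X^2+5*Y^2+12*z^2 = 32*K+28" using e by simp
      have d: "X + 5*Y = 16*p" unfolding X_def Y_def by simp
      have inO: "(X,Y,z) \<in> Op" unfolding Op_def using oX oY oz eX d by auto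
      have "?f (X,Y,z) = (4*p, 12*p - 4*Y, z)" using fO[of "(X,Y,z)" X Y z p] d by simp
      also have "\<dots> = w" unfolding w xp yq Y_def by simp
      finally have fw: "?f (X,Y,z) = w" .
      show "w \<in> ?f ` Op" by (rule image_eqI[where f = "?f", OF fw[symmetric] inO])
    qed
  qed
  have "card Op = card E1" using card_image[OF inj] img by simp
  then show ?thesis using tO NA cA cE c1 by simp
qed


lemma d32: "((32::int) dvd 16*E) = even E"
proof -
  have "((32::int) dvd 16*E) = ((16*2::int) dvd 16*E)" by simp
  also have "\<dots> = (2 dvd E)" by (subst dvd_mult_cancel_left) simp
  finally show ?thesis .
qed

lemma d4: "((4::int) dvd 2*E) = even E"
proof -
  have "((4::int) dvd 2*E) = ((2*2::int) dvd 2*E)" by simp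
  also have "\<dots> = (2 dvd E)" by (subst dvd_mult_cancel_left) simp
  finally show ?thesis .
qed

lemma case1:
  fixes n :: nat
  assumes nm: "n mod 4 = 3"
  shows "t 3 4 5 n = 2 * N 3 4 5 (2 * n + 3)"
proof -
  obtain k where nk: "n = 4*k+3" using nm by (metis div_mod_decomp mult.commute)
  define K where "K = int k"
  define Od where "Od = {(X::int,Y::int,Z::int). odd X \<and> odd Y \<and> odd Z \<and> 3*X^2+4*Y^2+5*Z^2 = 32*K+36}"
  define Pd where "Pd = {(X::int,Y::int,Z::int). odd X \<and> odd Y \<and> odd Z \<and> 3*X^2+4*Y^2+5*Z^2 = 32*K+36
      \<and> 8 dvd Z - 3*X}"
  define Op where "Op = {(X::int,Y::int,Z::int). odd X \<and> odd Y \<and> odd Z \<and> 3*X^2+4*Y^2+5*Z^2 = 32*K+36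
      \<and> 8 dvd Z - 3*X \<and> 32 dvd 3*X - 8*Y + 15*Z}"
  define Ts where "Ts = {(x::int,y::int,z::int). 3*x^2+4*y^2+5*z^2 = 8*K+9}"
  define Tp where "Tp = {(x::int,y::int,z::int). 3*x^2+4*y^2+5*z^2 = 8*K+9 \<and> 4 dvd x div 2 + y + z}"
  have tO: "t 3 4 5 n = card Od"
    unfolding t_odd Od_def K_def nk by (simp add: algebra_simps)
  have NT: "N 3 4 5 (2 * n + 3) = card Ts"
    unfolding N_def Ts_def K_def nk by (simp add: algebra_simps eq_commute)
  have finO: "finite Od"
  proof -
    have "Od \<subseteq> {(x,y,z). 3*x^2 + 4*y^2 + 5*z^2 = 32*K+36}" unfolding Od_def by auto
    moreover have "finite {(x::int,y::int,z::int). 3*x^2 + 4*y^2 + 5*z^2 = 32*K+36}"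
      by (rule fin_sols) auto
    ultimately show ?thesis by (rule finite_subset)
  qed
  have finP: "finite Pd" by (rule finite_subset[OF _ finO]) (auto simp: Od_def Pd_def)
  have finT: "finite Ts" unfolding Ts_def by (rule fin_sols) auto
  have KK: "(\<exists>r. Z - 3*X = 16*r + 8) \<or> (\<exists>r. Z + 3*X = 16*r + 8)"
    if oX: "odd X" and oY: "odd Y" and oZ: "odd Z" and e: "3*X^2+4*Y^2+5*Z^2 = 32*K+36" for X Y Z
  proof -
    obtain c where c: "Y^2 = 8*c+1" using odd_sq oY by blast
    have "3*X^2+5*Z^2 = 32*(K + 1 - c)" using e c by (smt (verit))
    then show ?thesis using K8 oX oZ by blast
  qed
  have NB: "\<not> (8 dvd Z - 3*X \<and> 8 dvd -Z - 3*X)" if oX: "odd X" for X Z :: int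
  proof
    assume "8 dvd Z - 3*X \<and> 8 dvd -Z - 3*X"
    then obtain h1 h2 where h1: "Z - 3*X = 8*h1" and h2: "-Z - 3*X = 8*h2" by blast
    obtain a where a: "X = 2*a+1" using oX oddE by blast
    have "2*(-2*h1 - 2*h2 - 3*a - 1) = 2*0+1" using h1 h2 a by (smt (verit))
    then show False using two_odd by blast
  qed
  let ?gz = "\<lambda>(X::int,Y::int,Z::int). (X,Y,-Z)"
  have cA: "card Od = 2 * card Pd"
  proof (rule half_card[OF finO, where g = ?gz])
    show "Pd \<subseteq> Od" unfolding Od_def Pd_def by auto
    show "\<forall>v\<in>Od. ?gz v \<in> Od" unfolding Od_def by auto
    show "\<forall>v\<in>Od. ?gz (?gz v) = v" by auto
    show "\<forall>v\<in>Od. (v \<in> Pd) = (?gz v \<notin> Pd)"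
    proof
      fix v assume "v \<in> Od"
      then obtain X Y Z where v: "v = (X,Y,Z)" and oX: "odd X" and oY: "odd Y" and oZ: "odd Z"
        and e: "3*X^2+4*Y^2+5*Z^2 = 32*K+36" unfolding Od_def by auto
      have one: "8 dvd Z - 3*X \<or> 8 dvd -Z - 3*X"
      proof (cases "\<exists>r. Z - 3*X = 16*r + 8")
        case True
        then obtain r where "Z - 3*X = 8*(2*r+1)" by auto
        then show ?thesis by (metis dvd_triv_left)
      next
        case False
        then obtain r where "Z + 3*X = 16*r + 8" using KK[OF oX oY oZ e] by blast
        then have "-Z - 3*X = 8*(-2*r-1)" by simp
        then show ?thesis by (metis dvd_triv_left)
      qed
      show "(v \<in> Pd) = (?gz v \<notin> Pd)"
        unfolding v Pd_def using oX oY oZ e one NB[OF oX, of Z] by auto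
    qed
  qed
  let ?gy = "\<lambda>(X::int,Y::int,Z::int). (X,-Y,Z)"
  have cB: "card Pd = 2 * card Op"
  proof (rule half_card[OF finP, where g = ?gy])
    show "Op \<subseteq> Pd" unfolding Op_def Pd_def by auto
    show "\<forall>v\<in>Pd. ?gy v \<in> Pd" unfolding Pd_def by auto
    show "\<forall>v\<in>Pd. ?gy (?gy v) = v" by auto
    show "\<forall>v\<in>Pd. (v \<in> Op) = (?gy v \<notin> Op)"
    proof
      fix v assume "v \<in> Pd"
      then obtain X Y Z where v: "v = (X,Y,Z)" and oX: "odd X" and oY: "odd Y" and oZ: "odd Z"
        and e: "3*X^2+4*Y^2+5*Z^2 = 32*K+36" and d8: "8 dvd Z - 3*X" unfolding Pd_def by auto
      obtain r where r: "Z - 3*X = 16*r + 8"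
      proof (cases "\<exists>r. Z - 3*X = 16*r + 8")
        case True then show ?thesis using that by blast
      next
        case False
        then obtain r where "Z + 3*X = 16*r + 8" using KK[OF oX oY oZ e] by blast
        then have "-Z - 3*X = 8*(-2*r-1)" by simp
        then have "8 dvd -Z - 3*X" by (metis dvd_triv_left)
        then show ?thesis using NB[OF oX, of Z] d8 by blast
      qed
      obtain a where a: "X = 2*a+1" using oX oddE by blast
      obtain b where b: "Y = 2*b+1" using oY oddE by blast
      have e1: "3*X - 8*Y + 15*Z = 16*(6*a + 15*r + 10 - b)" using r a b by (smt (verit))
      have e2: "3*X - 8*(-Y) + 15*Z = 16*(6*a + 15*r + 11 + b)" using r a b by (smt (verit))
      have "(6*a + 15*r + 10 - b) + (6*a + 15*r + 11 + b) = 2*(6*a+15*r+10) + 1" by simp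
      then have "odd ((6*a + 15*r + 10 - b) + (6*a + 15*r + 11 + b))" by (metis even_add even_mult_iff dvd_triv_left odd_one)
      then have par: "even (6*a + 15*r + 10 - b) = (\<not> even (6*a + 15*r + 11 + b))" by auto
      have "(32 dvd 3*X - 8*Y + 15*Z) = (\<not> 32 dvd 3*X - 8*(-Y) + 15*Z)"
        unfolding e1 e2 d32 using par by simp
      then show "(v \<in> Op) = (?gy v \<notin> Op)"
        unfolding v Op_def using oX oY oZ e d8 by auto
    qed
  qed
  have cC: "card Ts = 2 * card Tp"
  proof (rule half_card[OF finT, where g = ?gz])
    show "Tp \<subseteq> Ts" unfolding Ts_def Tp_def by auto
    show "\<forall>v\<in>Ts. ?gz v \<in> Ts" unfolding Ts_def by auto
    show "\<forall>v\<in>Ts. ?gz (?gz v) = v" by auto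
    show "\<forall>v\<in>Ts. (v \<in> Tp) = (?gz v \<notin> Tp)"
    proof
      fix w assume "w \<in> Ts"
      then obtain x y z where w: "w = (x,y,z)" and e: "3*x^2+4*y^2+5*z^2 = 8*K+9" unfolding Ts_def by auto
      have P: "even x \<and> odd z \<and> odd (x div 2 + y)" using T1[OF e] .
      obtain a where a: "x div 2 + y = 2*a+1" using P oddE by blast
      obtain b where b: "z = 2*b+1" using P oddE by blast
      have f1: "x div 2 + y + z = 2*(a+b+1)" using a b by simp
      have f2: "x div 2 + y + -z = 2*(a-b)" using a b by simp
      have "(a+b+1) + (a-b) = 2*a+1" by simp
      then have "odd ((a+b+1) + (a-b))" by (metis even_add even_mult_iff dvd_triv_left odd_one)
      then have par: "even (a+b+1) = (\<not> even (a-b))" by auto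
      have "(4 dvd x div 2 + y + z) = (\<not> 4 dvd x div 2 + y + -z)"
        unfolding f1 f2 d4 using par by simp
      then show "(w \<in> Tp) = (?gz w \<notin> Tp)" unfolding w Tp_def using e by auto
    qed
  qed
  let ?f = "\<lambda>(X::int,Y::int,Z::int). ((X+8*Y+5*Z) div 16, (3*X-8*Y+15*Z) div 32, (Z-3*X) div 8)"
  have fO: "\<exists>p q r. ?f v = (p,q,r) \<and> X+8*Y+5*Z = 16*p \<and> 3*X-8*Y+15*Z = 32*q \<and> Z-3*X = 8*r"
    if v: "v = (X,Y,Z)" and d1: "8 dvd Z - 3*X" and d2: "32 dvd 3*X - 8*Y + 15*Z" for v X Y Z
  proof -
    obtain r where r: "Z - 3*X = 8*r" using d1 by blast
    obtain q where q: "3*X - 8*Y + 15*Z = 32*q" using d2 by blast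
    have "X+8*Y+5*Z = 16*(2*r - 2*q + X + Z)" using r q by (smt (verit))
    then obtain p where p: "X+8*Y+5*Z = 16*p" by blast
    have "?f v = (p,q,r)" using v p q r by simp
    then show ?thesis using p q r by blast
  qed
  have inj: "inj_on ?f Op"
  proof (rule inj_onI)
    fix v1 v2 assume v1: "v1 \<in> Op" and v2: "v2 \<in> Op" and eq: "?f v1 = ?f v2"
    obtain X1 Y1 Z1 where V1: "v1 = (X1,Y1,Z1)" and a1: "8 dvd Z1 - 3*X1" and b1: "32 dvd 3*X1 - 8*Y1 + 15*Z1"
      using v1 unfolding Op_def by auto
    obtain X2 Y2 Z2 where V2: "v2 = (X2,Y2,Z2)" and a2: "8 dvd Z2 - 3*X2" and b2: "32 dvd 3*X2 - 8*Y2 + 15*Z2"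
      using v2 unfolding Op_def by auto
    obtain p1 q1 r1 where F1: "?f v1 = (p1,q1,r1)" "X1+8*Y1+5*Z1 = 16*p1" "3*X1-8*Y1+15*Z1 = 32*q1" "Z1-3*X1 = 8*r1"
      using fO[OF V1 a1 b1] by blast
    obtain p2 q2 r2 where F2: "?f v2 = (p2,q2,r2)" "X2+8*Y2+5*Z2 = 16*p2" "3*X2-8*Y2+15*Z2 = 32*q2" "Z2-3*X2 = 8*r2"
      using fO[OF V2 a2 b2] by blast
    have "p1 = p2" "q1 = q2" "r1 = r2" using eq F1(1) F2(1) by auto
    then have "X1 = X2" "Y1 = Y2" "Z1 = Z2" using F1 F2 by linarith+
    then show "v1 = v2" using V1 V2 by simp
  qed
  have img: "?f ` Op = Tp"
  proof
    show "?f ` Op \<subseteq> Tp"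
    proof
      fix w assume "w \<in> ?f ` Op"
      then obtain v where w: "w = ?f v" and vO: "v \<in> Op" by blast
      then obtain X Y Z where v: "v = (X,Y,Z)" and oX: "odd X" and a1: "8 dvd Z - 3*X" and b1: "32 dvd 3*X - 8*Y + 15*Z"
        and e: "3*X^2+4*Y^2+5*Z^2 = 32*K+36" unfolding Op_def by blast
      obtain p q r where F: "?f v = (p,q,r)" "X+8*Y+5*Z = 16*p" "3*X-8*Y+15*Z = 32*q" "Z-3*X = 8*r"
        using fO[OF v a1 b1] by blast
      have id: "12*(X+8*Y+5*Z)^2 + 4*(3*X-8*Y+15*Z)^2 + 80*(Z-3*X)^2 = 256*(3*X^2+4*Y^2+5*Z^2)"
        by (simp add: algebra_simps power2_eq_square)
      have "12*(16*p)^2 + 4*(32*q)^2 + 80*(8*r)^2 = 256*(32*K+36)" using id F(2-4) e by simp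
      then have eT: "3*p^2+4*q^2+5*r^2 = 8*K+9" by (simp add: power_mult_distrib)
      have P: "even p \<and> odd r \<and> odd (p div 2 + q)" using T1[OF eT] .
      obtain u where u: "p = 2*u" using P by blast
      have "2*p + 4*q - 20*r = 8*X" using F(2-4) by (smt (verit))
      then have ux: "u + q - 5*r = 2*X" using u by simp
      obtain a where a: "X = 2*a+1" using oX oddE by blast
      obtain b where b: "r = 2*b+1" using P oddE by blast
      have "p div 2 = u" using u by simp
      then have "p div 2 + q + r = 4*(a + 3*b + 2)" using ux a b by (smt (verit))
      then have "4 dvd p div 2 + q + r" by (metis dvd_triv_left)
      then show "w \<in> Tp" unfolding w F(1) Tp_def using eT by simp
    qed
    show "Tp \<subseteq> ?f ` Op"
    proof
      fix w assume "w \<in> Tp"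
      then obtain x y z where w: "w = (x,y,z)" and e: "3*x^2+4*y^2+5*z^2 = 8*K+9"
        and d: "4 dvd x div 2 + y + z" unfolding Tp_def by blast
      have P: "even x \<and> odd z \<and> odd (x div 2 + y)" using T1[OF e] .
      define u where "u = x div 2"
      have xu: "x = 2*u" using P unfolding u_def by simp
      have ouy: "odd (u+y)" using P unfolding u_def by simp
      have oz: "odd z" using P by simp
      obtain f where f: "u + y + z = 4*f" using d unfolding u_def by blast
      have yf: "y = 4*f - u - z" using f by simp
      define X where "X = 2*f - 3*z"
      define Y where "Y = 3*u - y"
      define Z where "Z = 6*f - z"
      have oX: "odd X" using oz unfolding X_def by simp
      have oY: "odd Y" using ouy unfolding Y_def by simp
      have oZ: "odd Z" using oz unfolding Z_def by simp
      have "3*X^2+4*Y^2+5*Z^2 = 4*(3*x^2+4*y^2+5*z^2)"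
        unfolding X_def Y_def Z_def xu yf by (simp add: algebra_simps power2_eq_square)
      then have eX: "3*X^2+4*Y^2+5*Z^2 = 32*K+36" using e by simp
      have c1: "Z - 3*X = 8*z" unfolding X_def Z_def by simp
      have c2: "3*X - 8*Y + 15*Z = 32*(4*f - u - z)" unfolding X_def Y_def Z_def yf by simp
      have c3: "X + 8*Y + 5*Z = 16*(2*u)" unfolding X_def Y_def Z_def yf by simp
      have inO: "(X,Y,Z) \<in> Op" unfolding Op_def using oX oY oZ eX c1 c2 by auto
      have "?f (X,Y,Z) = (2*u, 4*f - u - z, z)" using c1 c2 c3 by simp
      also have "\<dots> = w" unfolding w xu yf by simp
      finally have fw: "?f (X,Y,Z) = w" .
      show "w \<in> ?f ` Op" by (rule image_eqI[where f = "?f", OF fw[symmetric] inO])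
    qed
  qed
  have "card Op = card Tp" using card_image[OF inj] img by simp
  then show ?thesis using tO NT cA cB cC by simp
qed


lemma case3:
  fixes n :: nat
  assumes nm: "n mod 4 = 3"
  shows "t 3 5 36 n = 2 * N 3 5 36 (2 * n + 11)"
proof -
  obtain k where nk: "n = 4*k+3" using nm by (metis div_mod_decomp mult.commute)
  define K where "K = int k"
  define Od where "Od = {(X::int,Y::int,Z::int). odd X \<and> odd Y \<and> odd Z \<and> 3*X^2+5*Y^2+36*Z^2 = 32*K+68}"
  define Pd where "Pd = {(X::int,Y::int,Z::int). odd X \<and> odd Y \<and> odd Z \<and> 3*X^2+5*Y^2+36*Z^2 = 32*K+68
      \<and> 8 dvd Y - 3*X}"
  define Op where "Op = {(X::int,Y::int,Z::int). odd X \<and> odd Y \<and> odd Z \<and> 3*X^2+5*Y^2+36*Z^2 = 32*K+68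
      \<and> 8 dvd Y - 3*X \<and> 32 dvd X + 5*Y + 8*Z}"
  define Ts where "Ts = {(x::int,y::int,z::int). 3*x^2+5*y^2+36*z^2 = 8*K+17}"
  define Tp where "Tp = {(x::int,y::int,z::int). 3*x^2+5*y^2+36*z^2 = 8*K+17 \<and> 4 dvd x div 2 + y - 3*z + 2}"
  have tO: "t 3 5 36 n = card Od"
    unfolding t_odd Od_def K_def nk by (simp add: algebra_simps)
  have NT: "N 3 5 36 (2 * n + 11) = card Ts"
    unfolding N_def Ts_def K_def nk by (simp add: algebra_simps eq_commute)
  have finO: "finite Od"
  proof -
    have "Od \<subseteq> {(x,y,z). 3*x^2 + 5*y^2 + 36*z^2 = 32*K+68}" unfolding Od_def by auto
    moreover have "finite {(x::int,y::int,z::int). 3*x^2 + 5*y^2 + 36*z^2 = 32*K+68}"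
      by (rule fin_sols) auto
    ultimately show ?thesis by (rule finite_subset)
  qed
  have finP: "finite Pd" by (rule finite_subset[OF _ finO]) (auto simp: Od_def Pd_def)
  have finT: "finite Ts" unfolding Ts_def by (rule fin_sols) auto
  have KK: "(\<exists>r. Y - 3*X = 16*r + 8) \<or> (\<exists>r. Y + 3*X = 16*r + 8)"
    if oX: "odd X" and oY: "odd Y" and oZ: "odd Z" and e: "3*X^2+5*Y^2+36*Z^2 = 32*K+68" for X Y Z
  proof -
    obtain c where c: "Z^2 = 8*c+1" using odd_sq oZ by blast
    have "3*X^2+5*Y^2 = 32*(K + 1 - 9*c)" using e c by (smt (verit))
    then show ?thesis using K8 oX oY by blast
  qed
  have NB: "\<not> (8 dvd Y - 3*X \<and> 8 dvd -Y - 3*X)" if oX: "odd X" for X Y :: int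
  proof
    assume "8 dvd Y - 3*X \<and> 8 dvd -Y - 3*X"
    then obtain h1 h2 where h1: "Y - 3*X = 8*h1" and h2: "-Y - 3*X = 8*h2" by blast
    obtain a where a: "X = 2*a+1" using oX oddE by blast
    have "2*(-2*h1 - 2*h2 - 3*a - 1) = 2*0+1" using h1 h2 a by (smt (verit))
    then show False using two_odd by blast
  qed
  let ?gy = "\<lambda>(X::int,Y::int,Z::int). (X,-Y,Z)"
  let ?gz = "\<lambda>(X::int,Y::int,Z::int). (X,Y,-Z)"
  have cA: "card Od = 2 * card Pd"
  proof (rule half_card[OF finO, where g = ?gy])
    show "Pd \<subseteq> Od" unfolding Od_def Pd_def by auto
    show "\<forall>v\<in>Od. ?gy v \<in> Od" unfolding Od_def by auto
    show "\<forall>v\<in>Od. ?gy (?gy v) = v" by auto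
    show "\<forall>v\<in>Od. (v \<in> Pd) = (?gy v \<notin> Pd)"
    proof
      fix v assume "v \<in> Od"
      then obtain X Y Z where v: "v = (X,Y,Z)" and oX: "odd X" and oY: "odd Y" and oZ: "odd Z"
        and e: "3*X^2+5*Y^2+36*Z^2 = 32*K+68" unfolding Od_def by auto
      have one: "8 dvd Y - 3*X \<or> 8 dvd -Y - 3*X"
      proof (cases "\<exists>r. Y - 3*X = 16*r + 8")
        case True
        then obtain r where "Y - 3*X = 8*(2*r+1)" by auto
        then show ?thesis by (metis dvd_triv_left)
      next
        case False
        then obtain r where "Y + 3*X = 16*r + 8" using KK[OF oX oY oZ e] by blast
        then have "-Y - 3*X = 8*(-2*r-1)" by simp
        then show ?thesis by (metis dvd_triv_left)
      qed
      show "(v \<in> Pd) = (?gy v \<notin> Pd)"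
        unfolding v Pd_def using oX oY oZ e one NB[OF oX, of Y] by auto
    qed
  qed
  have cB: "card Pd = 2 * card Op"
  proof (rule half_card[OF finP, where g = ?gz])
    show "Op \<subseteq> Pd" unfolding Op_def Pd_def by auto
    show "\<forall>v\<in>Pd. ?gz v \<in> Pd" unfolding Pd_def by auto
    show "\<forall>v\<in>Pd. ?gz (?gz v) = v" by auto
    show "\<forall>v\<in>Pd. (v \<in> Op) = (?gz v \<notin> Op)"
    proof
      fix v assume "v \<in> Pd"
      then obtain X Y Z where v: "v = (X,Y,Z)" and oX: "odd X" and oY: "odd Y" and oZ: "odd Z"
        and e: "3*X^2+5*Y^2+36*Z^2 = 32*K+68" and d8: "8 dvd Y - 3*X" unfolding Pd_def by auto
      obtain r where r: "Y - 3*X = 16*r + 8"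
      proof (cases "\<exists>r. Y - 3*X = 16*r + 8")
        case True then show ?thesis using that by blast
      next
        case False
        then obtain r where "Y + 3*X = 16*r + 8" using KK[OF oX oY oZ e] by blast
        then have "-Y - 3*X = 8*(-2*r-1)" by simp
        then have "8 dvd -Y - 3*X" by (metis dvd_triv_left)
        then show ?thesis using NB[OF oX, of Y] d8 by blast
      qed
      obtain a where a: "X = 2*a+1" using oX oddE by blast
      obtain b where b: "Z = 2*b+1" using oZ oddE by blast
      have e1: "X + 5*Y + 8*Z = 16*(2*a + 5*r + 4 + b)" using r a b by (smt (verit))
      have e2: "X + 5*Y + 8*(-Z) = 16*(2*a + 5*r + 3 - b)" using r a b by (smt (verit))
      have "(2*a + 5*r + 4 + b) + (2*a + 5*r + 3 - b) = 2*(2*a+5*r+3) + 1" by simp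
      then have "odd ((2*a + 5*r + 4 + b) + (2*a + 5*r + 3 - b))" by (metis even_add even_mult_iff dvd_triv_left odd_one)
      then have par: "even (2*a + 5*r + 4 + b) = (\<not> even (2*a + 5*r + 3 - b))" by auto
      have "(32 dvd X + 5*Y + 8*Z) = (\<not> 32 dvd X + 5*Y + 8*(-Z))"
        unfolding e1 e2 d32 using par by simp
      then show "(v \<in> Op) = (?gz v \<notin> Op)"
        unfolding v Op_def using oX oY oZ e d8 by auto
    qed
  qed
  have cC: "card Ts = 2 * card Tp"
  proof (rule half_card[OF finT, where g = ?gy])
    show "Tp \<subseteq> Ts" unfolding Ts_def Tp_def by auto
    show "\<forall>v\<in>Ts. ?gy v \<in> Ts" unfolding Ts_def by auto
    show "\<forall>v\<in>Ts. ?gy (?gy v) = v" by auto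
    show "\<forall>v\<in>Ts. (v \<in> Tp) = (?gy v \<notin> Tp)"
    proof
      fix w assume "w \<in> Ts"
      then obtain x y z where w: "w = (x,y,z)" and e: "3*x^2+5*y^2+36*z^2 = 8*K+17" unfolding Ts_def by auto
      have P: "even x \<and> odd y \<and> odd (x div 2 + z)" using T3[OF e] .
      obtain a where a: "x div 2 + z = 2*a+1" using P oddE by blast
      obtain b where b: "y = 2*b+1" using P oddE by blast
      have f1: "x div 2 + y - 3*z + 2 = 2*(a + b + 2 - 2*z)" using a b by simp
      have f2: "x div 2 + -y - 3*z + 2 = 2*(a - b + 1 - 2*z)" using a b by simp
      have "(a + b + 2 - 2*z) + (a - b + 1 - 2*z) = 2*(a - 2*z + 1) + 1" by simp
      then have "odd ((a + b + 2 - 2*z) + (a - b + 1 - 2*z))" by (metis even_add even_mult_iff dvd_triv_left odd_one)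
      then have par: "even (a + b + 2 - 2*z) = (\<not> even (a - b + 1 - 2*z))" by auto
      have "(4 dvd x div 2 + y - 3*z + 2) = (\<not> 4 dvd x div 2 + -y - 3*z + 2)"
        unfolding f1 f2 d4 using par by simp
      then show "(w \<in> Tp) = (?gy w \<notin> Tp)" unfolding w Tp_def using e by auto
    qed
  qed
  let ?f = "\<lambda>(X::int,Y::int,Z::int). ((-X-5*Y+24*Z) div 16, (Y-3*X) div 8, (X+5*Y+8*Z) div 32)"
  have fO: "\<exists>p q r. ?f v = (p,q,r) \<and> -X-5*Y+24*Z = 16*p \<and> Y-3*X = 8*q \<and> X+5*Y+8*Z = 32*r"
    if v: "v = (X,Y,Z)" and d1: "8 dvd Y - 3*X" and d2: "32 dvd X + 5*Y + 8*Z" for v X Y Z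
  proof -
    obtain q where q: "Y - 3*X = 8*q" using d1 by blast
    obtain r where r: "X + 5*Y + 8*Z = 32*r" using d2 by blast
    have "-X-5*Y+24*Z = 16*(2*Z - 2*r)" using r by (smt (verit))
    then obtain p where p: "-X-5*Y+24*Z = 16*p" by blast
    have "?f v = (p,q,r)" using v p q r by simp
    then show ?thesis using p q r by blast
  qed
  have inj: "inj_on ?f Op"
  proof (rule inj_onI)
    fix v1 v2 assume v1: "v1 \<in> Op" and v2: "v2 \<in> Op" and eq: "?f v1 = ?f v2"
    obtain X1 Y1 Z1 where V1: "v1 = (X1,Y1,Z1)" and a1: "8 dvd Y1 - 3*X1" and b1: "32 dvd X1 + 5*Y1 + 8*Z1"
      using v1 unfolding Op_def by auto
    obtain X2 Y2 Z2 where V2: "v2 = (X2,Y2,Z2)" and a2: "8 dvd Y2 - 3*X2" and b2: "32 dvd X2 + 5*Y2 + 8*Z2"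
      using v2 unfolding Op_def by auto
    obtain p1 q1 r1 where F1: "?f v1 = (p1,q1,r1)" "-X1-5*Y1+24*Z1 = 16*p1" "Y1-3*X1 = 8*q1" "X1+5*Y1+8*Z1 = 32*r1"
      using fO[OF V1 a1 b1] by blast
    obtain p2 q2 r2 where F2: "?f v2 = (p2,q2,r2)" "-X2-5*Y2+24*Z2 = 16*p2" "Y2-3*X2 = 8*q2" "X2+5*Y2+8*Z2 = 32*r2"
      using fO[OF V2 a2 b2] by blast
    have "p1 = p2" "q1 = q2" "r1 = r2" using eq F1(1) F2(1) by auto
    then have "X1 = X2" "Y1 = Y2" "Z1 = Z2" using F1 F2 by linarith+
    then show "v1 = v2" using V1 V2 by simp
  qed
  have img: "?f ` Op = Tp"
  proof
    show "?f ` Op \<subseteq> Tp"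
    proof
      fix w assume "w \<in> ?f ` Op"
      then obtain v where w: "w = ?f v" and vO: "v \<in> Op" by blast
      then obtain X Y Z where v: "v = (X,Y,Z)" and oX: "odd X" and a1: "8 dvd Y - 3*X" and b1: "32 dvd X + 5*Y + 8*Z"
        and e: "3*X^2+5*Y^2+36*Z^2 = 32*K+68" unfolding Op_def by blast
      obtain p q r where F: "?f v = (p,q,r)" "-X-5*Y+24*Z = 16*p" "Y-3*X = 8*q" "X+5*Y+8*Z = 32*r"
        using fO[OF v a1 b1] by blast
      have id: "12*(-X-5*Y+24*Z)^2 + 80*(Y-3*X)^2 + 36*(X+5*Y+8*Z)^2 = 256*(3*X^2+5*Y^2+36*Z^2)"
        by (simp add: algebra_simps power2_eq_square)
      have "12*(16*p)^2 + 80*(8*q)^2 + 36*(32*r)^2 = 256*(32*K+68)" using id F(2-4) e by simp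
      then have eT: "3*p^2+5*q^2+36*r^2 = 8*K+17" by (simp add: power_mult_distrib)
      have P: "even p \<and> odd q \<and> odd (p div 2 + r)" using T3[OF eT] .
      obtain u where u: "p = 2*u" using P by blast
      have "-16*p - 160*q + 96*r = 64*X" using F(2-4) by (smt (verit))
      then have ux: "-u - 5*q + 3*r = 2*X" using u by simp
      obtain a where a: "X = 2*a+1" using oX oddE by blast
      have "p div 2 = u" using u by simp
      then have "p div 2 + q - 3*r + 2 = 4*(-a - q)" using ux a by (smt (verit))
      then have "4 dvd p div 2 + q - 3*r + 2" by (metis dvd_triv_left)
      then show "w \<in> Tp" unfolding w F(1) Tp_def using eT by simp
    qed
    show "Tp \<subseteq> ?f ` Op"
    proof
      fix w assume "w \<in> Tp"
      then obtain x y z where w: "w = (x,y,z)" and e: "3*x^2+5*y^2+36*z^2 = 8*K+17"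
        and d: "4 dvd x div 2 + y - 3*z + 2" unfolding Tp_def by blast
      have P: "even x \<and> odd y \<and> odd (x div 2 + z)" using T3[OF e] .
      define u where "u = x div 2"
      have xu: "x = 2*u" using P unfolding u_def by simp
      have oy: "odd y" using P by simp
      obtain g where g: "u + y - 3*z + 2 = 4*g" using d unfolding u_def by blast
      have ug: "u = 4*g - y + 3*z - 2" using g by simp
      define X where "X = -2*g - 2*y + 1"
      define Y where "Y = -6*g + 2*y + 3"
      define Z where "Z = 4*g - y + 4*z - 2"
      have oX: "odd X" unfolding X_def by simp
      have oY: "odd Y" unfolding Y_def by simp
      have oZ: "odd Z" using oy unfolding Z_def by simp
      have "3*X^2+5*Y^2+36*Z^2 = 4*(3*x^2+5*y^2+36*z^2)"
        unfolding X_def Y_def Z_def xu ug by (simp add: algebra_simps power2_eq_square)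
      then have eX: "3*X^2+5*Y^2+36*Z^2 = 32*K+68" using e by simp
      have c1: "Y - 3*X = 8*y" unfolding X_def Y_def by simp
      have c2: "X + 5*Y + 8*Z = 32*z" unfolding X_def Y_def Z_def by simp
      have c3: "-X - 5*Y + 24*Z = 16*(2*u)" unfolding X_def Y_def Z_def ug by simp
      have inO: "(X,Y,Z) \<in> Op" unfolding Op_def using oX oY oZ eX c1 c2 by auto
      have "?f (X,Y,Z) = (2*u, y, z)" using c1 c2 c3 by simp
      also have "\<dots> = w" unfolding w xu by simp
      finally have fw: "?f (X,Y,Z) = w" .
      show "w \<in> ?f ` Op" by (rule image_eqI[where f = "?f", OF fw[symmetric] inO])
    qed
  qed
  have "card Op = card Tp" using card_image[OF inj] img by simp
  then show ?thesis using tO NT cA cB cC by simp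
qed


theorem theorem6p1:
  fixes n :: nat
  assumes "n > 0"
  shows "(n mod 4 = 3 \<longrightarrow> t 3 4 5 n = 2 * N 3 4 5 (2 * n + 3)) \<and>
    (n mod 4 = 1 \<longrightarrow> t 3 5 20 n = 2 * N 3 5 20 (2 * n + 7)) \<and>
    (n mod 4 = 3 \<longrightarrow> t 3 5 36 n = 2 * N 3 5 36 (2 * n + 11)) \<and>
    (n mod 4 = 1 \<longrightarrow> real (t 3 5 12 n) = real (N 3 5 12 (8 * n + 20)) / 2)"
proof (intro conjI impI)
  assume "n mod 4 = 3" then show "t 3 4 5 n = 2 * N 3 4 5 (2 * n + 3)" by (rule case1)
next
  assume "n mod 4 = 1" then show "t 3 5 20 n = 2 * N 3 5 20 (2 * n + 7)" by (rule case2)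
next
  assume "n mod 4 = 3" then show "t 3 5 36 n = 2 * N 3 5 36 (2 * n + 11)" by (rule case3)
next
  assume "n mod 4 = 1"
  then have "N 3 5 12 (8 * n + 20) = 2 * t 3 5 12 n" by (rule case4)
  then show "real (t 3 5 12 n) = real (N 3 5 12 (8 * n + 20)) / 2" by simp
qed

end
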